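(* For each positive integer $N$, let $$f(N)=\{\, y\in\mathbb{R} \;:\; y\equiv \sqrt{n} \pmod 1 \text{ for some } n\in\mathbb{N},\ n\le N,\ \sqrt{n}\notin\mathbb{N}\,\},$$ i.e. the set of fractional parts of $\sqrt{n}$ for the non-square $n\le N$, extended periodically with period $1$ to all reals with the same fractional parts. For a set $A\subset\mathbb{R}$ and $x\in\mathbb{R}$ define $$\operatorname{gap}_x(A)=\inf\{y\in A: y>x\}-\sup\{y\in A: y<x\},$$ and set $g(x,N)=\operatorname{gap}_x(f(N))$ and $G(x)=\lim_{N\to\infty}2\sqrt{N}\,g(x,N)$. Then $$G(x)=\begin{cases}2 & x\in\mathbb{Z},\\ \frac{2}{q} & x=\frac{p}{q},\ \gcd(p,q)=1,\ q\ge 2,\ q\equiv 0 \pmod 2,\\ \frac{1}{q} & x=\frac{p}{q},\ \gcd(p,q)=1,\ q\ge 2,\ q\equiv 1 \pmod 2,\\ 0 & x\notin\mathbb{Q}.\end{cases}$$ Equivalently, for $x=p/q$ in lowest terms with $q\ge 2$, $G(p/q)=\gcd(2,q)/q$.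
   Context: $\mathbb{N}$ denotes the positive integers. The fractional part of a real number $t$ is $t-\lfloor t\rfloor$. *)

theory Defs
  imports Complex_Main
begin

definition fset :: "nat \<Rightarrow> real set" where
  "fset N = {y. \<exists>n::nat. 1 \<le> n \<and> n \<le> N \<and> sqrt (real n) \<notin> \<nat> \<and>
                        frac y = frac (sqrt (real n))}"

definition gap :: "real \<Rightarrow> real set \<Rightarrow> real" where
  "gap x A = Inf {y \<in> A. y > x} - Sup {y \<in> A. y < x}"

definition g :: "real \<Rightarrow> nat \<Rightarrow> real" where
  "g x N = gap x (fset N)"

end

theory Submission
  imports Defs "HOL-Analysis.Kronecker_Approximation_Theorem"
begin

lemma syndetic:
  fixes \<alpha> \<epsilon> :: real
  assumes irr: "\<alpha> \<notin> \<rat>" and eps: "\<epsilon> > 0"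
  obtains L :: nat where "\<And>\<beta> M. \<exists>m::int. M \<le> m \<and> m \<le> M + int L \<and>
       0 < frac (\<beta> + of_int m * \<alpha>) \<and> frac (\<beta> + of_int m * \<alpha>) < \<epsilon>"
proof -
  define e where "e = min \<epsilon> 1"
  have e: "0 < e" "e \<le> \<epsilon>" "e \<le> 1" using eps by (auto simp: e_def)
  have "-\<alpha> \<notin> \<rat>" using irr by (metis Rats_minus_iff)
  then obtain h :: nat where h: "h > 0" "\<bar>frac (real h * (-\<alpha>)) - e/2\<bar> < e/2"
    using Kronecker_approx_1_explicit[of "-\<alpha>" "e/2" "e/2"] e by auto
  define t where "t = frac (real h * (-\<alpha>))"
  have t: "0 < t" "t < e" using h(2) unfolding t_def[symmetric] by linarith+
  have t1: "t < 1" using t e by linarith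
  define L where "L = nat (ceiling (real h / t))"
  have key: "\<exists>m::int. M \<le> m \<and> m \<le> M + int L \<and>
       0 < frac (\<beta> + of_int m * \<alpha>) \<and> frac (\<beta> + of_int m * \<alpha>) < \<epsilon>" for \<beta> M
  proof -
    define w where "w = \<beta> + of_int M * \<alpha>"
    define u where "u = w - of_int (ceiling w) + 1"
    have u: "0 < u" "u \<le> 1" unfolding u_def
      using ceiling_correct[of w] by linarith+
    define k where "k = nat (ceiling (u / t) - 1)"
    have upos: "u / t > 0" using u t by simp
    have "real_of_int (ceiling (u/t)) > 0" using upos le_of_int_ceiling[of "u/t"] by linarith
    then have ck: "ceiling (u/t) \<ge> 1" by simp
    have kr: "real k = of_int (ceiling (u/t)) - 1" unfolding k_def using ck by simp
    have k1: "real k < u / t" using kr ceiling_correct[of "u/t"] by linarith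
    have k2: "real k \<ge> u / t - 1" using kr ceiling_correct[of "u/t"] by linarith
    have r1: "u - real k * t > 0" using k1 t by (simp add: field_simps)
    have r2: "u - real k * t \<le> t" using k2 t by (simp add: field_simps)
    define m where "m = M + int k * int h"
    have hdec: "real h * (-\<alpha>) = of_int (floor (real h * (-\<alpha>))) + t"
      unfolding t_def frac_def by simp
    have eq: "\<beta> + of_int m * \<alpha> = (u - real k * t) +
       of_int (ceiling w - 1 - int k * floor (real h * (-\<alpha>)))"
    proof -
      have "\<beta> + of_int m * \<alpha> = w - real k * (real h * (-\<alpha>))"
        unfolding m_def w_def by (simp add: algebra_simps)
      also have "\<dots> = w - real k * (of_int (floor (real h * (-\<alpha>))) + t)"
        using hdec by simp
      finally show ?thesis unfolding u_def by (simp add: algebra_simps)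
    qed
    have fr: "frac (\<beta> + of_int m * \<alpha>) = u - real k * t"
      unfolding eq using r1 r2 t1 by (subst frac_add_of_int_right) (simp add: frac_eq)
    have "real k * real h \<le> (u / t) * real h" using k1 by (intro mult_right_mono) auto
    also have "\<dots> \<le> (1 / t) * real h" using u t by (intro mult_right_mono divide_right_mono) auto
    also have "\<dots> \<le> real L"
    proof -
      have "real h / t \<ge> 0" using t by simp
      then have c0: "ceiling (real h / t) \<ge> 0" by simp
      have "real L = of_int (ceiling (real h / t))" unfolding L_def using c0 by simp
      then show ?thesis using le_of_int_ceiling[of "real h / t"] by simp
    qed
    finally have "real k * real h \<le> real L" .
    then have "k * h \<le> L" by (metis of_nat_le_iff of_nat_mult)
    then have "int k * int h \<le> int L" by (metis of_nat_le_iff of_nat_mult)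
    then show ?thesis using fr r1 r2 t e
      by (intro exI[of _ m]) (auto simp: m_def)
  qed
  show ?thesis using key that by blast
qed

lemma fset_mem:
  assumes "1 \<le> n" "n \<le> N" "sqrt (real n) \<notin> \<nat>"
  shows "sqrt (real n) + of_int k \<in> fset N"
  using assms unfolding fset_def by auto

lemma fset_elim:
  assumes "y \<in> fset N"
  obtains n k where "1 \<le> n" "n \<le> N" "sqrt (real n) \<notin> \<nat>" "y = sqrt (real n) + of_int k"
proof -
  obtain n where n: "1 \<le> n" "n \<le> N" "sqrt (real n) \<notin> \<nat>" "frac y = frac (sqrt (real n))"
    using assms unfolding fset_def by auto
  have "y = sqrt (real n) + of_int (floor y - floor (sqrt (real n)))"
    using n(4) unfolding frac_def by simp
  then show ?thesis using n that by blast
qed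

lemma gap_upper:
  assumes "a \<in> A" "b \<in> A" "a < x" "x < b"
  shows "gap x A \<le> b - a"
proof -
  have "Inf {y \<in> A. y > x} \<le> b"
    by (rule cInf_lower) (use assms in \<open>auto intro!: bdd_belowI[of _ x]\<close>)
  moreover have "Sup {y \<in> A. y < x} \<ge> a"
    by (rule cSup_upper) (use assms in \<open>auto intro!: bdd_aboveI[of _ x]\<close>)
  ultimately show ?thesis unfolding gap_def by linarith
qed

lemma gap_lower:
  assumes "a \<in> A" "b \<in> A" "a < x" "x < b"
    and "\<And>y. y \<in> A \<Longrightarrow> y > x \<Longrightarrow> y \<ge> x + u"
    and "\<And>y. y \<in> A \<Longrightarrow> y < x \<Longrightarrow> y \<le> x - v"
  shows "gap x A \<ge> u + v"
proof -
  have "Inf {y \<in> A. y > x} \<ge> x + u"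
    by (rule cInf_greatest) (use assms in auto)
  moreover have "Sup {y \<in> A. y < x} \<le> x - v"
    by (rule cSup_least) (use assms in auto)
  ultimately show ?thesis unfolding gap_def by linarith
qed

lemma diff_frac_helper:
  fixes Q s c :: real
  assumes "Q > 0" "Q * s + c > 0"
  shows "s - c / Q = ((Q * s - c) * (Q * s + c)) / (Q * (Q * s + c))"
proof -
  have "s - c / Q = (Q * s - c) / Q" using assms by (simp add: field_simps)
  also have "\<dots> = ((Q * s - c) * (Q * s + c)) / (Q * (Q * s + c))"
    using assms by (metis mult_divide_mult_cancel_right less_irrefl)
  finally show ?thesis .
qed

lemma aux_le1:
  fixes a Q W :: real
  assumes "a \<le> Q^2" "W \<ge> 1" "Q \<ge> 1"
  shows "a / (Q^2 * W) \<le> 1"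
proof -
  have "Q^2 \<le> Q^2 * W" using assms by simp
  then have "a \<le> Q^2 * W" using assms by linarith
  moreover have "Q^2 * W > 0" using assms by simp
  ultimately show ?thesis by (simp add: pos_divide_le_eq)
qed

lemma lower_rat:
  fixes p q a b :: int and x :: real
  assumes q: "q \<ge> 1" and ab: "a > 0" "b > 0" "a \<le> q^2" "b \<le> q^2"
    and H: "\<And>n c. n \<ge> 1 \<Longrightarrow> sqrt (real n) \<notin> \<nat> \<Longrightarrow> q dvd (c - p) \<Longrightarrow>
       (q^2 * int n - c^2 > 0 \<longrightarrow> q^2 * int n - c^2 \<ge> a) \<and>
       (q^2 * int n - c^2 < 0 \<longrightarrow> c^2 - q^2 * int n \<ge> b)"
    and x: "x = of_int p / of_int q"
    and y: "y \<in> fset N"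
  shows "y > x \<Longrightarrow> y \<ge> x + of_int a / (of_int q^2 * (2 * sqrt (real N) + 1))"
    and "y < x \<Longrightarrow> y \<le> x - of_int b / (of_int q^2 * (2 * sqrt (real N) + 1))"
proof -
  obtain n k where n: "1 \<le> n" "n \<le> N" "sqrt (real n) \<notin> \<nat>" and yk: "y = sqrt (real n) + of_int k"
    using y fset_elim by blast
  define c where "c = p - q * k"
  define Q where "Q = (of_int q :: real)"
  define s where "s = sqrt (real n)"
  define W where "W = 2 * sqrt (real N) + 1"
  have Q: "Q \<ge> 1" using q by (simp add: Q_def)
  have s1: "s \<ge> 1" using n by (simp add: s_def)
  have sN: "s \<le> sqrt (real N)" using n by (simp add: s_def)
  have W1: "W \<ge> 1" by (simp add: W_def)
  have ss: "s * s = real n" using s_def by simp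
  have dvd: "q dvd (c - p)" by (simp add: c_def)
  note Hn = H[OF n(1) n(3) dvd]
  have yx: "y - x = s - of_int c / Q"
    using q unfolding yk x c_def s_def Q_def by (simp add: field_simps)
  have Dr: "of_int (q^2 * int n - c^2) = (Q * s - of_int c) * (Q * s + of_int c)"
    unfolding Q_def using ss by (simp add: algebra_simps power2_eq_square)
  have aW: "of_int a / (Q^2 * W) \<le> 1"
    using ab(3) Q W1 by (intro aux_le1) (auto simp: Q_def simp flip: of_int_power)
  have bW: "of_int b / (Q^2 * W) \<le> 1"
    using ab(4) Q W1 by (intro aux_le1) (auto simp: Q_def simp flip: of_int_power)
  show "y \<ge> x + of_int a / (of_int q^2 * (2 * sqrt (real N) + 1))" if yx0: "y > x"
  proof (cases "y - x \<ge> 1")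
    case True then show ?thesis using aW unfolding Q_def W_def by linarith
  next
    case False
    have lt: "0 < s - of_int c / Q" "s - of_int c / Q < 1" using yx yx0 False by linarith+
    have "of_int c / Q > 0" using lt s1 by linarith
    then have cpos: "of_int c > (0::real)" using Q by (simp add: divide_pos_pos zero_less_divide_iff)
    have pos1: "Q * s - of_int c > 0" using lt(1) Q by (simp add: field_simps)
    have "of_int (q^2 * int n - c^2) > (0::real)" using Dr pos1 cpos Q s1 by simp
    then have Dp: "q^2 * int n - c^2 > 0" by linarith
    then have Da: "of_int (q^2 * int n - c^2) \<ge> (of_int a::real)" using Hn by linarith
    have "y - x = of_int (q^2 * int n - c^2) / (Q * (Q * s + of_int c))"
      unfolding yx Dr using Q cpos s1 by (intro diff_frac_helper) (auto intro!: add_pos_pos)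
    also have "\<dots> \<ge> of_int a / (Q^2 * W)"
    proof (rule frac_le)
      show "0 \<le> real_of_int (q\<^sup>2 * int n - c\<^sup>2)" using Dp by linarith
      show "0 < Q * (Q * s + of_int c)" using Q cpos s1 by (intro mult_pos_pos add_pos_pos) auto
      have "Q * s + of_int c \<le> 2 * Q * s" using pos1 by linarith
      also have "\<dots> \<le> Q * W" using sN Q unfolding W_def by (simp add: mult_left_mono)
      finally show "Q * (Q * s + of_int c) \<le> Q^2 * W" using Q
        by (simp add: power2_eq_square mult_left_mono mult.assoc)
    qed (use Da in auto)
    finally show ?thesis unfolding Q_def W_def by linarith
  qed
  show "y \<le> x - of_int b / (of_int q^2 * (2 * sqrt (real N) + 1))" if yx0: "y < x"
  proof (cases "x - y \<ge> 1")
    case True then show ?thesis using bW unfolding Q_def W_def by linarith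
  next
    case False
    have lt: "0 < of_int c / Q - s" "of_int c / Q - s < 1" using yx yx0 False by linarith+
    have "of_int c / Q > 0" using lt s1 by linarith
    then have cpos: "of_int c > (0::real)" using Q by (simp add: divide_pos_pos zero_less_divide_iff)
    have pos1: "of_int c - Q * s > 0" using lt(1) Q by (simp add: field_simps)
    have pos2: "of_int c - Q * s < Q" using lt(2) Q by (simp add: field_simps)
    have "Q * s + of_int c > 0" using Q s1 cpos by (simp add: add_pos_pos)
    then have "of_int (q^2 * int n - c^2) < (0::real)" unfolding Dr using pos1
      by (intro mult_neg_pos) auto
    then have Dp: "q^2 * int n - c^2 < 0" by linarith
    then have Db: "of_int (c^2 - q^2 * int n) \<ge> (of_int b::real)" using Hn by linarith
    have "x - y = of_int (c^2 - q^2 * int n) / (Q * (Q * s + of_int c))"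
    proof -
      have e0: "of_int (c^2 - q^2 * int n) = - ((Q * s - of_int c) * (Q * s + of_int c))"
        using Dr by (simp add: algebra_simps)
      have "Q * s + of_int c > 0" using Q s1 cpos by (simp add: add_pos_pos)
      then have e2: "s - of_int c / Q = ((Q * s - of_int c) * (Q * s + of_int c)) / (Q * (Q * s + of_int c))"
        using Q by (intro diff_frac_helper) auto
      have "x - y = - (s - of_int c / Q)" using yx by simp
      also have "\<dots> = - (((Q * s - of_int c) * (Q * s + of_int c)) / (Q * (Q * s + of_int c)))"
        using e2 by simp
      also have "\<dots> = (- ((Q * s - of_int c) * (Q * s + of_int c))) / (Q * (Q * s + of_int c))"
        by (rule minus_divide_left)
      also have "\<dots> = of_int (c^2 - q^2 * int n) / (Q * (Q * s + of_int c))"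
        by (simp only: e0)
      finally show ?thesis .
    qed
    also have "\<dots> \<ge> of_int b / (Q^2 * W)"
    proof (rule frac_le)
      show "0 \<le> real_of_int (c\<^sup>2 - q\<^sup>2 * int n)" using Dp by linarith
      show "0 < Q * (Q * s + of_int c)" using Q cpos s1 by (intro mult_pos_pos add_pos_pos) auto
      have "Q * s + of_int c \<le> 2 * Q * s + Q" using pos2 by linarith
      also have "\<dots> \<le> Q * W" using sN Q unfolding W_def by (simp add: algebra_simps mult_left_mono)
      finally show "Q * (Q * s + of_int c) \<le> Q^2 * W" using Q
        by (simp add: power2_eq_square mult_left_mono mult.assoc)
    qed (use Db in auto)
    finally show ?thesis unfolding Q_def W_def by linarith
  qed
qed

lemma upper_witness:
  fixes q p c0 D :: int
  assumes q: "q \<ge> 1" and D: "D \<noteq> 0" and d1: "q dvd (c0 - p)" and d2: "q^2 dvd (c0^2 + D)"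
  shows "\<exists>F. F \<longlonglongrightarrow> of_int D / of_int q^2 \<and>
    (\<forall>\<^sub>F N in sequentially. \<exists>y \<in> fset N. 2 * sqrt (real N) * (y - of_int p / of_int q) = F N
        \<and> (D > 0 \<longrightarrow> y > of_int p / of_int q) \<and> (D < 0 \<longrightarrow> y < of_int p / of_int q))"
proof -
  define Q where "Q = q^2"
  define Qr where "Qr = (of_int Q :: real)"
  define qr where "qr = (of_int q :: real)"
  define Dr where "Dr = (of_int D :: real)"
  have qr1: "qr \<ge> 1" using q by (simp add: qr_def)
  have Qrq: "Qr = qr^2" by (simp add: Qr_def qr_def Q_def)
  have Qr1: "Qr \<ge> 1" using qr1 Qrq by (simp add: one_le_power)
  have Q1: "Q \<ge> 1" using Qr1 by (simp add: Qr_def)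
  define S where "S = (\<lambda>N::nat. sqrt (Qr * real N - Dr))"
  define c where "c = (\<lambda>N::nat. c0 + Q * floor ((S N - of_int c0) / Qr))"
  define R where "R = (\<lambda>N::nat. sqrt (of_int (c N)^2 + Dr))"
  define F where "F = (\<lambda>N::nat. 2 * sqrt (real N) * (R N - of_int (c N)) / qr)"
  define T where "T = Qr + \<bar>Dr\<bar> + 1"
  define N0 where "N0 = nat (ceiling (T^2 + \<bar>Dr\<bar>)) + 1"
  have cle: "of_int (c N) \<le> S N" for N
  proof -
    have "Qr * of_int (floor ((S N - of_int c0) / Qr)) \<le> Qr * ((S N - of_int c0) / Qr)"
      using Qr1 by (intro mult_left_mono) auto
    then show ?thesis using Qr1 unfolding c_def Qr_def by simp
  qed
  have cgt: "of_int (c N) > S N - Qr" for N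
  proof -
    have "Qr * of_int (floor ((S N - of_int c0) / Qr)) > Qr * ((S N - of_int c0) / Qr - 1)"
      using Qr1 floor_correct[of "(S N - of_int c0) / Qr"] by (intro mult_strict_left_mono) auto
    moreover have "Qr * ((S N - of_int c0) / Qr - 1) = S N - of_int c0 - Qr"
      using Qr1 by (simp add: field_simps)
    ultimately show ?thesis unfolding c_def Qr_def by simp
  qed
  have big: "Qr * real N - Dr \<ge> T^2 \<and> S N \<ge> T" if "N \<ge> N0" for N
  proof -
    have "real N \<ge> T^2 + \<bar>Dr\<bar>" using that unfolding N0_def
      using le_of_int_ceiling[of "T^2 + \<bar>Dr\<bar>"] by linarith
    moreover have "Qr * real N \<ge> 1 * real N" using Qr1 by (intro mult_right_mono) auto
    ultimately have h: "Qr * real N - Dr \<ge> T^2" by linarith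
    have "T \<ge> 0" unfolding T_def using Qr1 by simp
    then have "sqrt (T^2) \<le> S N" unfolding S_def using h by (subst real_sqrt_le_iff) 
    then show ?thesis using h \<open>T \<ge> 0\<close> by simp
  qed
  have cD_all: "of_int (c N) > \<bar>Dr\<bar>" if "N \<ge> N0" for N
    using big[OF that] cgt[of N] unfolding T_def by linarith
  have ev: "\<exists>y \<in> fset N. 2 * sqrt (real N) * (y - of_int p / of_int q) = F N
        \<and> (D > 0 \<longrightarrow> y > of_int p / of_int q) \<and> (D < 0 \<longrightarrow> y < of_int p / of_int q)"
    if N: "N \<ge> N0" for N
  proof -
    note b = big[OF N]
    have cD: "of_int (c N) > \<bar>Dr\<bar>" using b cgt[of N] unfolding T_def by linarith
    have cpos: "c N \<ge> 1" using cD by linarith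
    have cDi: "c N > \<bar>D\<bar>" using cD unfolding Dr_def by linarith
    have "of_int (c N) ^2 \<le> (S N)^2" using cle[of N] cpos by (intro power_mono) auto
    also have "(S N)^2 = Qr * real N - Dr" unfolding S_def using b T_def Qr1
      by (intro real_sqrt_pow2) (smt (verit) zero_le_power2)
    finally have "real_of_int (c N ^2 + D) \<le> real_of_int (Q * int N)"
      unfolding Qr_def Dr_def by simp
    then have c2le: "c N ^2 + D \<le> Q * int N" by (simp only: of_int_le_iff)
    have "c N ^2 \<ge> c N" using cpos by (simp add: power2_eq_square)
    then have c2pos: "c N^2 + D > 0" using cDi by linarith
    obtain j where cj: "c N = c0 + Q * j" unfolding c_def by blast
    have dvdQ: "Q dvd (c N^2 + D)"
    proof -
      obtain m where m: "c0^2 + D = Q * m" using d2 unfolding Q_def by blast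
      have "c N^2 + D = Q * (m + 2 * c0 * j + Q * j^2)"
        unfolding cj using m by (simp add: algebra_simps power2_eq_square)
      then show ?thesis by simp
    qed
    have dvdq: "q dvd (c N - p)"
    proof -
      have e: "c N - p = (c0 - p) + q * (q * j)" unfolding cj Q_def by (simp add: power2_eq_square)
      show ?thesis unfolding e using d1 by (intro dvd_add) auto
    qed
    define n where "n = nat ((c N^2 + D) div Q)"
    have Qn: "Q * int n = c N^2 + D" unfolding n_def using dvdQ c2pos Q1
      by (simp add: pos_imp_zdiv_nonneg_iff)
    have n1: "n \<ge> 1"
    proof (rule ccontr)
      assume "\<not> n \<ge> 1" then have "n = 0" by simp
      then show False using Qn c2pos by simp
    qed
    have "Q * int n \<le> Q * int N" using Qn c2le by simp
    then have "int n \<le> int N" using Q1 by (simp add: mult_le_cancel_left_pos)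
    then have nN: "n \<le> N" by simp
    have "real_of_int (c N^2 + D) > 0" using c2pos by (simp only: of_int_0_less_iff)
    then have Rpos: "of_int (c N)^2 + Dr > 0" unfolding Dr_def by simp
    have sqn: "sqrt (real n) = R N / qr"
    proof -
      have "real n = (of_int (c N)^2 + Dr) / Qr"
        using arg_cong[OF Qn, of "of_int :: int \<Rightarrow> real"] Qr1
        unfolding Qr_def Dr_def by (simp add: field_simps)
      then have "sqrt (real n) = sqrt (of_int (c N)^2 + Dr) / sqrt Qr"
        by (simp add: real_sqrt_divide)
      also have "sqrt Qr = qr" using Qrq qr1 by simp
      finally show ?thesis unfolding R_def .
    qed
    obtain k where k: "p - c N = q * k" using dvdq by (metis dvd_def dvd_minus_iff minus_diff_eq)
    have kr: "of_int k = (of_int p - of_int (c N)) / qr"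
      using arg_cong[OF k, of "of_int :: int \<Rightarrow> real"] qr1 unfolding qr_def by (simp add: field_simps)
    define y where "y = sqrt (real n) + of_int k"
    have yx: "y - of_int p / of_int q = (R N - of_int (c N)) / qr"
      unfolding y_def sqn kr using qr1 unfolding qr_def by (simp add: field_simps)
    have R0: "R N \<ge> 0" unfolding R_def using Rpos by simp
    have RR: "R N ^2 = of_int (c N)^2 + Dr" unfolding R_def using Rpos by simp
    have "(R N - of_int (c N)) * (R N + of_int (c N)) = R N ^2 - of_int (c N)^2"
      by (simp add: algebra_simps power2_eq_square)
    then have Rc: "(R N - of_int (c N)) * (R N + of_int (c N)) = Dr" using RR by simp
    have Rcpos: "R N + of_int (c N) > 0" using R0 cpos by linarith
    have Rceq: "R N - of_int (c N) = Dr / (R N + of_int (c N))"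
      using Rc Rcpos by (simp add: eq_divide_eq)
    have Rcabs: "\<bar>R N - of_int (c N)\<bar> < 1"
    proof -
      have "\<bar>R N - of_int (c N)\<bar> = \<bar>Dr\<bar> / (R N + of_int (c N))"
        unfolding Rceq using Rcpos by (simp add: abs_divide)
      also have "\<dots> < 1" using Rcpos cD R0 by (subst divide_less_eq_1_pos) auto
      finally show ?thesis .
    qed
    have nsq: "sqrt (real n) \<notin> \<nat>"
    proof
      assume "sqrt (real n) \<in> \<nat>"
      then obtain m :: nat where m: "sqrt (real n) = real m" by (auto elim: Nats_cases)
      have "R N = qr * sqrt (real n)" using sqn qr1 by simp
      then have Rm: "R N = qr * real m" using m by simp
      have "(qr * real m)^2 = of_int (c N)^2 + Dr" using RR Rm by simp
      then have "of_int ((q * int m)^2) = (of_int (c N ^2 + D) :: real)"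
        unfolding qr_def Dr_def by simp
      then have eq: "(q * int m)^2 = c N^2 + D" by (simp only: of_int_eq_iff)
      have "q * int m \<noteq> c N"
      proof
        assume "q * int m = c N" then show False using eq D by simp
      qed
      then have "\<bar>q * int m - c N\<bar> \<ge> 1" by linarith
      then have "real_of_int 1 \<le> real_of_int \<bar>q * int m - c N\<bar>" by (rule of_int_le_iff[THEN iffD2])
      then have "\<bar>of_int (q * int m) - of_int (c N)\<bar> \<ge> (1::real)" by simp
      moreover have "R N - of_int (c N) = of_int (q * int m) - of_int (c N)" using Rm unfolding qr_def by simp
      ultimately show False using Rcabs by linarith
    qed
    have yin: "y \<in> fset N" unfolding y_def using fset_mem[OF n1 nN nsq] .
    have sgn1: "D > 0 \<Longrightarrow> R N - of_int (c N) > 0"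
      using Rceq Rcpos unfolding Dr_def by simp
    have sgn2: "D < 0 \<Longrightarrow> R N - of_int (c N) < 0"
      using Rceq Rcpos unfolding Dr_def by (simp add: divide_neg_pos)
    show ?thesis
    proof (intro bexI[OF _ yin] conjI impI)
      show "2 * sqrt (real N) * (y - of_int p / of_int q) = F N" unfolding F_def yx by simp
      show "of_int p / of_int q < y" if "D > 0"
      proof -
        have "(R N - of_int (c N)) / qr > 0" using sgn1[OF that] qr1 by simp
        then show ?thesis using yx by linarith
      qed
      show "y < of_int p / of_int q" if "D < 0"
      proof -
        have "(R N - of_int (c N)) / qr < 0" using sgn2[OF that] qr1 by (simp add: divide_neg_pos)
        then show ?thesis using yx by linarith
      qed
    qed
  qed
  have lim: "F \<longlonglongrightarrow> of_int D / of_int q^2"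
  proof -
    define r where "r = (\<lambda>N::nat. of_int (c N) / sqrt (real N))"
    have h1: "(\<lambda>N::nat. Dr / real N) \<longlonglongrightarrow> 0" by real_asymp
    have h3: "(\<lambda>N::nat. Qr / sqrt (real N)) \<longlonglongrightarrow> 0" by real_asymp
    have sQ: "sqrt Qr = qr" using Qrq qr1 by simp
    have h2: "(\<lambda>N::nat. sqrt (Qr - Dr / real N)) \<longlonglongrightarrow> qr"
      using tendsto_real_sqrt[OF tendsto_diff[OF tendsto_const h1, of Qr]] sQ by simp
    have h2': "(\<lambda>N::nat. sqrt (Qr - Dr / real N) - Qr / sqrt (real N)) \<longlonglongrightarrow> qr"
      using tendsto_diff[OF h2 h3] by simp
    have SN: "S N / sqrt (real N) = sqrt (Qr - Dr / real N)" if "N \<ge> 1" for N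
    proof -
      have "S N / sqrt (real N) = sqrt ((Qr * real N - Dr) / real N)"
        unfolding S_def by (simp add: real_sqrt_divide)
      also have "(Qr * real N - Dr) / real N = Qr - Dr / real N" using that by (simp add: field_simps)
      finally show ?thesis .
    qed
    have hr: "r \<longlonglongrightarrow> qr"
    proof (rule tendsto_sandwich[OF _ _ h2' h2])
      show "\<forall>\<^sub>F N in sequentially. sqrt (Qr - Dr / real N) - Qr / sqrt (real N) \<le> r N"
      proof (rule eventually_sequentiallyI[of 1])
        fix N :: nat assume N: "N \<ge> 1"
        have "(S N - Qr) / sqrt (real N) \<le> r N" unfolding r_def using cgt[of N] N
          by (intro divide_right_mono) auto
        then show "sqrt (Qr - Dr / real N) - Qr / sqrt (real N) \<le> r N"
          using SN[OF N] by (simp add: diff_divide_distrib)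
      qed
      show "\<forall>\<^sub>F N in sequentially. r N \<le> sqrt (Qr - Dr / real N)"
      proof (rule eventually_sequentiallyI[of 1])
        fix N :: nat assume N: "N \<ge> 1"
        have "r N \<le> S N / sqrt (real N)" unfolding r_def using cle[of N] N
          by (intro divide_right_mono) auto
        then show "r N \<le> sqrt (Qr - Dr / real N)" using SN[OF N] by simp
      qed
    qed
    have hR: "(\<lambda>N. sqrt ((r N)^2 + Dr / real N)) \<longlonglongrightarrow> qr"
      using tendsto_real_sqrt[OF tendsto_add[OF tendsto_power[OF hr, of 2] h1]] qr1 by simp
    have hG: "(\<lambda>N. 2 * Dr / (qr * (sqrt ((r N)^2 + Dr / real N) + r N))) \<longlonglongrightarrow> 2 * Dr / (qr * (qr + qr))"
      using qr1 by (intro tendsto_intros hR hr) auto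
    have lval: "2 * Dr / (qr * (qr + qr)) = of_int D / of_int q^2"
      using qr1 unfolding Dr_def qr_def by (simp add: field_simps power2_eq_square)
    have evq: "\<forall>\<^sub>F N in sequentially. 2 * Dr / (qr * (sqrt ((r N)^2 + Dr / real N) + r N)) = F N"
    proof (rule eventually_sequentiallyI[of "max N0 1"])
      fix N :: nat assume N: "N \<ge> max N0 1"
      define C where "C = (of_int (c N) :: real)"
      define s where "s = sqrt (real N)"
      have s0: "s > 0" using N by (simp add: s_def)
      have ss: "s^2 = real N" by (simp add: s_def)
      have CD: "C > \<bar>Dr\<bar>" using cD_all[of N] N unfolding C_def by simp
      have "real_of_int (c N) > 0" using CD unfolding C_def by linarith
      then have "c N \<ge> 1" by simp
      then have C1: "C \<ge> 1" unfolding C_def by simp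
      have "C * C \<ge> C * 1" using C1 by (intro mult_left_mono) auto
      then have CDp: "C^2 + Dr > 0" using CD by (simp add: power2_eq_square)
      have RR: "R N ^2 = C^2 + Dr" unfolding R_def C_def[symmetric] using CDp by simp
      have R0: "R N \<ge> 0" unfolding R_def C_def[symmetric] using CDp by simp
      have RC: "R N + C > 0" using R0 CD by linarith
      have e1: "sqrt ((r N)^2 + Dr / real N) = R N / s"
      proof -
        have "(r N)^2 = C^2 / s^2"
          unfolding r_def C_def[symmetric] s_def[symmetric] by (simp add: power_divide)
        then have "(r N)^2 + Dr / real N = (C^2 + Dr) / s^2"
          unfolding ss by (simp add: add_divide_distrib)
        then have "sqrt ((r N)^2 + Dr / real N) = sqrt (C^2 + Dr) / s"
          using s0 by (simp add: real_sqrt_divide)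
        then show ?thesis unfolding R_def C_def by simp
      qed
      have e2: "R N - C = Dr / (R N + C)"
      proof -
        have "(R N - C) * (R N + C) = R N ^2 - C^2" by (simp add: algebra_simps power2_eq_square)
        then have "(R N - C) * (R N + C) = Dr" using RR by simp
        then show ?thesis using RC by (simp add: eq_divide_eq)
      qed
      have "F N = 2 * s * (Dr / (R N + C)) / qr" unfolding F_def s_def[symmetric] C_def[symmetric] e2 ..
      also have "\<dots> = 2 * Dr / (qr * (R N / s + C / s))"
        using s0 RC qr1 by (simp add: field_simps)
      finally have FN: "F N = 2 * Dr / (qr * (R N / s + C / s))" .
      have rN: "r N = C / s" unfolding r_def C_def s_def ..
      show "2 * Dr / (qr * (sqrt ((r N)^2 + Dr / real N) + r N)) = F N"
        unfolding e1 FN by (simp only: rN)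
    qed
    show ?thesis using Lim_transform_eventually[OF hG evq] lval by simp
  qed
  have "\<forall>\<^sub>F N in sequentially. \<exists>y \<in> fset N. 2 * sqrt (real N) * (y - of_int p / of_int q) = F N
        \<and> (D > 0 \<longrightarrow> y > of_int p / of_int q) \<and> (D < 0 \<longrightarrow> y < of_int p / of_int q)"
    by (rule eventually_sequentiallyI[of N0]) (rule ev)
  then show ?thesis using lim by blast
qed

lemma rational_limit:
  fixes p q a b c0 c1 :: int
  assumes q: "q \<ge> 1" and ab: "a > 0" "b > 0" "a \<le> q^2" "b \<le> q^2"
    and H: "\<And>n c. n \<ge> 1 \<Longrightarrow> sqrt (real n) \<notin> \<nat> \<Longrightarrow> q dvd (c - p) \<Longrightarrow>
       (q^2 * int n - c^2 > 0 \<longrightarrow> q^2 * int n - c^2 \<ge> a) \<and>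
       (q^2 * int n - c^2 < 0 \<longrightarrow> c^2 - q^2 * int n \<ge> b)"
    and c0: "q dvd (c0 - p)" "q^2 dvd (c0^2 + a)"
    and c1: "q dvd (c1 - p)" "q^2 dvd (c1^2 + (- b))"
  shows "(\<lambda>N. 2 * sqrt (real N) * g (of_int p / of_int q) N) \<longlonglongrightarrow> of_int (a + b) / of_int q^2"
proof -
  define x where "x = (of_int p / of_int q :: real)"
  obtain F1 where F1: "F1 \<longlonglongrightarrow> of_int a / of_int q^2"
    and ev1: "\<forall>\<^sub>F N in sequentially. \<exists>y \<in> fset N. 2 * sqrt (real N) * (y - x) = F1 N
        \<and> (a > 0 \<longrightarrow> y > x) \<and> (a < 0 \<longrightarrow> y < x)"
    using upper_witness[OF q _ c0] ab unfolding x_def by force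
  obtain F2 where F2: "F2 \<longlonglongrightarrow> of_int (- b) / of_int q^2"
    and ev2: "\<forall>\<^sub>F N in sequentially. \<exists>y \<in> fset N. 2 * sqrt (real N) * (y - x) = F2 N
        \<and> (- b > 0 \<longrightarrow> y > x) \<and> (- b < 0 \<longrightarrow> y < x)"
    using upper_witness[OF q _ c1] ab unfolding x_def by force
  define W where "W = (\<lambda>N::nat. 2 * sqrt (real N) + 1)"
  define K where "K = (of_int (a + b) / of_int q^2 :: real)"
  have bounds: "2 * sqrt (real N) * K / W N \<le> 2 * sqrt (real N) * g x N \<and>
        2 * sqrt (real N) * g x N \<le> F1 N - F2 N"
    if P1: "\<exists>y \<in> fset N. 2 * sqrt (real N) * (y - x) = F1 N \<and> (a > 0 \<longrightarrow> y > x) \<and> (a < 0 \<longrightarrow> y < x)"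
       and P2: "\<exists>y \<in> fset N. 2 * sqrt (real N) * (y - x) = F2 N \<and> (- b > 0 \<longrightarrow> y > x) \<and> (- b < 0 \<longrightarrow> y < x)"
    for N
  proof -
    obtain y1 where y1: "y1 \<in> fset N" "2 * sqrt (real N) * (y1 - x) = F1 N" "y1 > x"
      using P1 ab by auto
    obtain y2 where y2: "y2 \<in> fset N" "2 * sqrt (real N) * (y2 - x) = F2 N" "y2 < x"
      using P2 ab by auto
    have up: "g x N \<le> y1 - y2" unfolding g_def by (rule gap_upper[OF y2(1) y1(1) y2(3) y1(3)])
    have lo: "g x N \<ge> of_int a / (of_int q^2 * W N) + of_int b / (of_int q^2 * W N)"
      unfolding g_def W_def
    proof (rule gap_lower[OF y2(1) y1(1) y2(3) y1(3)])
      fix y assume "y \<in> fset N" "y > x"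
      then show "y \<ge> x + of_int a / (of_int q^2 * (2 * sqrt (real N) + 1))"
        using lower_rat(1)[OF q ab H x_def] by blast
    next
      fix y assume "y \<in> fset N" "y < x"
      then show "y \<le> x - of_int b / (of_int q^2 * (2 * sqrt (real N) + 1))"
        using lower_rat(2)[OF q ab H x_def] by blast
    qed
    have s0: "sqrt (real N) \<ge> 0" by simp
    have "2 * sqrt (real N) * g x N \<le> 2 * sqrt (real N) * (y1 - y2)"
      using up s0 by (intro mult_left_mono) auto
    also have "\<dots> = F1 N - F2 N" using y1(2) y2(2) by (simp add: algebra_simps)
    finally have A1: "2 * sqrt (real N) * g x N \<le> F1 N - F2 N" .
    have "of_int a / (of_int q^2 * W N) + of_int b / (of_int q^2 * W N) = K / W N"
      unfolding K_def by (simp add: add_divide_distrib)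
    then have "g x N \<ge> K / W N" using lo by simp
    then have "2 * sqrt (real N) * (K / W N) \<le> 2 * sqrt (real N) * g x N"
      using s0 by (intro mult_left_mono) auto
    then show ?thesis using A1 by simp
  qed
  have lowlim: "(\<lambda>N. 2 * sqrt (real N) * K / W N) \<longlonglongrightarrow> K"
  proof -
    have "(\<lambda>N::nat. 2 * sqrt (real N) / (2 * sqrt (real N) + 1)) \<longlonglongrightarrow> 1" by real_asymp
    then have "(\<lambda>N::nat. K * (2 * sqrt (real N) / (2 * sqrt (real N) + 1))) \<longlonglongrightarrow> K * 1"
      by (intro tendsto_mult tendsto_const)
    then show ?thesis unfolding W_def by (simp add: mult.commute)
  qed
  have uplim: "(\<lambda>N. F1 N - F2 N) \<longlonglongrightarrow> K"
  proof -
    have "(\<lambda>N. F1 N - F2 N) \<longlonglongrightarrow> of_int a / of_int q^2 - of_int (- b) / of_int q^2"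
      by (intro tendsto_diff F1 F2)
    moreover have "of_int a / of_int q^2 - of_int (- b) / of_int q^2 = K"
      unfolding K_def by (simp add: add_divide_distrib)
    ultimately show ?thesis by simp
  qed
  have evb: "\<forall>\<^sub>F N in sequentially. 2 * sqrt (real N) * K / W N \<le> 2 * sqrt (real N) * g x N \<and>
        2 * sqrt (real N) * g x N \<le> F1 N - F2 N"
    using eventually_conj[OF ev1 ev2] by eventually_elim (rule bounds; blast)
  have "(\<lambda>N. 2 * sqrt (real N) * g x N) \<longlonglongrightarrow> K"
    by (rule tendsto_sandwich[OF _ _ lowlim uplim]) (use evb in \<open>auto elim: eventually_mono\<close>)
  then show ?thesis unfolding K_def x_def .
qed

lemma Ints_not_Rats: "x \<notin> \<rat> \<Longrightarrow> (x::real) \<notin> \<int>"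
  by (metis Ints_cases Rats_of_int)

lemma sqrt_ge_eventually:
  "\<forall>\<^sub>F N in sequentially. sqrt (real N) \<ge> (K::real)"
proof (rule eventually_sequentiallyI[of "nat (ceiling (K^2))"])
  fix N assume "nat (ceiling (K^2)) \<le> N"
  then have "real N \<ge> K^2" using le_of_int_ceiling[of "K^2"] by linarith
  then have "sqrt (real N) \<ge> sqrt (K^2)" by (subst real_sqrt_le_iff) simp
  then show "sqrt (real N) \<ge> K" by simp
qed

lemma upper_irr:
  fixes x \<epsilon> :: real
  assumes irr: "x \<notin> \<rat>" and eps: "\<epsilon> > 0"
  shows "\<forall>\<^sub>F N in sequentially. \<exists>y\<in>fset N. y > x \<and> y - x < \<epsilon> / sqrt (real N)"
proof -
  have irr2: "-2 * x \<notin> \<rat>"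
  proof
    assume "-2 * x \<in> \<rat>"
    then have "(-2 * x) / (-2) \<in> \<rat>" by (intro Rats_divide) auto
    then show False using irr by simp
  qed
  obtain L :: nat where L: "\<And>\<beta> M. \<exists>m::int. M \<le> m \<and> m \<le> M + int L \<and>
       0 < frac (\<beta> + of_int m * (-2 * x)) \<and> frac (\<beta> + of_int m * (-2 * x)) < \<epsilon>"
    using syndetic[OF irr2 eps] by blast
  have xni: "x \<notin> \<int>" using irr Ints_not_Rats by blast
  define \<delta> where "\<delta> = of_int (ceiling x) - x"
  have \<delta>: "\<delta> > 0" unfolding \<delta>_def using xni le_of_int_ceiling[of x]
    by (metis Ints_of_int diff_gt_0_iff_gt order_le_less)
  define K where "K = max (4 * \<bar>x\<bar> + 2 * real L + 4) (\<epsilon> / \<delta> + 1)"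
  show ?thesis using sqrt_ge_eventually[of K]
  proof eventually_elim
    fix N :: nat assume sK: "sqrt (real N) \<ge> K"
    define sN where "sN = sqrt (real N)"
    have sN1: "sN \<ge> 4 * \<bar>x\<bar> + 2 * real L + 4" "sN \<ge> \<epsilon> / \<delta> + 1"
      using sK unfolding sN_def K_def by auto
    have sN0: "sN \<ge> 2" using sN1 abs_ge_zero[of x] of_nat_0_le_iff[of L, where 'a=real] by linarith
    have sNsq: "sN^2 = real N" unfolding sN_def by simp
    define M where "M = ceiling (sN / 2 + \<bar>x\<bar>)"
    obtain m :: int where m: "M \<le> m" "m \<le> M + int L"
      "0 < frac (- (x^2) + of_int m * (-2 * x))" "frac (- (x^2) + of_int m * (-2 * x)) < \<epsilon>"
      using L[of M "- (x^2)"] by blast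
    define mx where "mx = of_int m + x"
    have mx1: "mx \<ge> sN / 2" unfolding mx_def using m(1) le_of_int_ceiling[of "sN / 2 + \<bar>x\<bar>"]
      unfolding M_def by (smt (verit) of_int_le_iff)
    have mx2: "mx \<le> sN - 1"
    proof -
      have "of_int M < sN / 2 + \<bar>x\<bar> + 1" unfolding M_def using ceiling_correct[of "sN / 2 + \<bar>x\<bar>"] by linarith
      moreover have "of_int m \<le> of_int M + real L" using m(2) by (metis of_int_add of_int_le_iff of_int_of_nat_eq)
      ultimately show ?thesis unfolding mx_def using sN1(1) by linarith
    qed
    define v where "v = mx^2"
    have fv: "frac (- v) = frac (- (x^2) + of_int m * (-2 * x))"
    proof -
      have "- v = (- (x^2) + of_int m * (-2 * x)) + of_int (- (m^2))"
        unfolding v_def mx_def by (simp add: power2_eq_square algebra_simps)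
      then show ?thesis by (simp only: frac_add_of_int_right)
    qed
    define nn where "nn = ceiling v"
    have nnv: "of_int nn = v + frac (- v)" unfolding nn_def ceiling_def frac_def by simp
    have nv1: "of_int nn - v > 0" "of_int nn - v < \<epsilon>" using nnv fv m(3,4) by simp_all
    have v0: "v \<ge> 0" unfolding v_def by simp
    have "real_of_int nn > 0" using nv1 v0 by linarith
    then have nn1: "nn \<ge> 1" by simp
    define n where "n = nat nn"
    have nr: "real n = of_int nn" unfolding n_def using nn1 by simp
    have n1: "n \<ge> 1" unfolding n_def using nn1 by simp
    have mx0: "mx > 0" using mx1 sN0 by linarith
    have "v \<le> (sN - 1)^2" unfolding v_def using mx2 mx0 by (intro power_mono) auto
    also have "\<dots> = real N - 2 * sN + 1" using sNsq by (simp add: power2_eq_square algebra_simps)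
    finally have "v + 1 \<le> real N" using sN0 by linarith
    then have "real n \<le> real N" using nr nv1 ceiling_correct[of v] unfolding nn_def by linarith
    then have nN: "n \<le> N" by simp
    have sq_gt: "sqrt (real n) > mx"
    proof -
      have "real n > mx^2" using nr nv1 unfolding v_def by linarith
      then have "sqrt (real n) > sqrt (mx^2)" by (subst real_sqrt_less_iff) 
      then show ?thesis using mx0 by simp
    qed
    have sqn2: "sqrt (real n) ^2 = real n" by simp
    have dif: "sqrt (real n) - mx = (real n - v) / (sqrt (real n) + mx)"
    proof -
      have "(sqrt (real n) - mx) * (sqrt (real n) + mx) = sqrt (real n)^2 - mx^2"
        by (simp add: algebra_simps power2_eq_square)
      then have "(sqrt (real n) - mx) * (sqrt (real n) + mx) = real n - v" unfolding v_def by simp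
      moreover have "sqrt (real n) + mx > 0" using sq_gt mx0 by linarith
      ultimately show ?thesis by (simp add: eq_divide_eq)
    qed
    have difb: "sqrt (real n) - mx < \<epsilon> / sN"
    proof -
      have den: "sqrt (real n) + mx \<ge> sN" using sq_gt mx1 by linarith
      have "(real n - v) / (sqrt (real n) + mx) \<le> (real n - v) / sN"
        using den sN0 nv1 nr by (intro divide_left_mono) auto
      also have "\<dots> < \<epsilon> / sN" using nv1 nr sN0 by (intro divide_strict_right_mono) auto
      finally show ?thesis using dif by simp
    qed
    have dpos: "sqrt (real n) - mx > 0" using sq_gt by simp
    have epsd: "\<epsilon> / sN < \<delta>"
    proof -
      have "\<epsilon> / \<delta> < sN" using sN1(2) by linarith
      then have "\<epsilon> < sN * \<delta>" using \<delta> by (simp add: pos_divide_less_eq)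
      moreover have "sN > 0" using sN0 by linarith
      ultimately show ?thesis by (simp add: pos_divide_less_eq mult.commute)
    qed
    have nsq: "sqrt (real n) \<notin> \<nat>"
    proof
      assume "sqrt (real n) \<in> \<nat>"
      then obtain s :: nat where s: "sqrt (real n) = real s" by (auto elim: Nats_cases)
      define k where "k = int s - m"
      have kx: "of_int k - x = sqrt (real n) - mx" unfolding k_def mx_def s by simp
      then have "of_int k > x" using dpos by linarith
      then have "k \<ge> ceiling x" by (simp add: ceiling_le_iff less_imp_le)
      then have "real_of_int (ceiling x) \<le> real_of_int k" by (rule of_int_le_iff[THEN iffD2])
      then have "of_int k - x \<ge> \<delta>" unfolding \<delta>_def by linarith
      then show False using kx difb epsd by linarith
    qed
    define y where "y = sqrt (real n) + of_int (- m)"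
    have yin: "y \<in> fset N" unfolding y_def by (rule fset_mem[OF n1 nN nsq])
    have yx: "y - x = sqrt (real n) - mx" unfolding y_def mx_def by simp
    show "\<exists>y\<in>fset N. y > x \<and> y - x < \<epsilon> / sqrt (real N)"
      using yin yx dpos difb unfolding sN_def by (intro bexI[of _ y]) auto
  qed
qed

lemma lower_irr:
  fixes x \<epsilon> :: real
  assumes irr: "x \<notin> \<rat>" and eps: "\<epsilon> > 0"
  shows "\<forall>\<^sub>F N in sequentially. \<exists>y\<in>fset N. y < x \<and> x - y < \<epsilon> / sqrt (real N)"
proof -
  have irr2: "2 * x \<notin> \<rat>"
  proof
    assume "2 * x \<in> \<rat>"
    then have "(2 * x) / 2 \<in> \<rat>" by (intro Rats_divide) auto
    then show False using irr by simp
  qed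
  have eps2: "\<epsilon> / 2 > 0" using eps by simp
  obtain L :: nat where L: "\<And>\<beta> M. \<exists>m::int. M \<le> m \<and> m \<le> M + int L \<and>
       0 < frac (\<beta> + of_int m * (2 * x)) \<and> frac (\<beta> + of_int m * (2 * x)) < \<epsilon> / 2"
    using syndetic[OF irr2 eps2] by blast
  have xni: "x \<notin> \<int>" using irr Ints_not_Rats by blast
  define \<delta> where "\<delta> = x - of_int (floor x)"
  have \<delta>: "\<delta> > 0" unfolding \<delta>_def using xni of_int_floor_le[of x]
    by (metis Ints_of_int diff_gt_0_iff_gt order_le_less)
  define K where "K = max (4 * \<bar>x\<bar> + 2 * real L + 4) (\<epsilon> / \<delta> + 1)"
  show ?thesis using sqrt_ge_eventually[of K]
  proof eventually_elim
    fix N :: nat assume sK: "sqrt (real N) \<ge> K"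
    define sN where "sN = sqrt (real N)"
    have sN1: "sN \<ge> 4 * \<bar>x\<bar> + 2 * real L + 4" "sN \<ge> \<epsilon> / \<delta> + 1"
      using sK unfolding sN_def K_def by auto
    have sN0: "sN \<ge> 4" using sN1 abs_ge_zero[of x] of_nat_0_le_iff[of L, where 'a=real] by linarith
    have sNsq: "sN^2 = real N" unfolding sN_def by simp
    define M where "M = ceiling (sN / 2 + \<bar>x\<bar>)"
    obtain m :: int where m: "M \<le> m" "m \<le> M + int L"
      "0 < frac (x^2 + of_int m * (2 * x))" "frac (x^2 + of_int m * (2 * x)) < \<epsilon> / 2"
      using L[of M "x^2"] by blast
    define mx where "mx = of_int m + x"
    have mx1: "mx \<ge> sN / 2" unfolding mx_def using m(1) le_of_int_ceiling[of "sN / 2 + \<bar>x\<bar>"]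
      unfolding M_def by (smt (verit) of_int_le_iff)
    have mx2: "mx \<le> sN - 1"
    proof -
      have "of_int M < sN / 2 + \<bar>x\<bar> + 1" unfolding M_def using ceiling_correct[of "sN / 2 + \<bar>x\<bar>"] by linarith
      moreover have "of_int m \<le> of_int M + real L" using m(2) by (metis of_int_add of_int_le_iff of_int_of_nat_eq)
      ultimately show ?thesis unfolding mx_def using sN1(1) by linarith
    qed
    define v where "v = mx^2"
    have fv: "frac v = frac (x^2 + of_int m * (2 * x))"
    proof -
      have "v = (x^2 + of_int m * (2 * x)) + of_int (m^2)"
        unfolding v_def mx_def by (simp add: power2_eq_square algebra_simps)
      then show ?thesis by (simp only: frac_add_of_int_right)
    qed
    define nn where "nn = floor v"
    have nnv: "of_int nn = v - frac v" unfolding nn_def frac_def by simp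
    have nv1: "v - of_int nn > 0" "v - of_int nn < \<epsilon> / 2" using nnv fv m(3,4) by simp_all
    have mx0: "mx \<ge> 2" using mx1 sN0 by linarith
    have "(2::real)^2 \<le> mx^2" using mx0 by (intro power_mono) auto
    then have v4: "v \<ge> 4" unfolding v_def by simp
    have "real_of_int nn > 0" using nnv frac_lt_1[of v] v4 by linarith
    then have nn1: "nn \<ge> 1" by simp
    define n where "n = nat nn"
    have nr: "real n = of_int nn" unfolding n_def using nn1 by simp
    have n1: "n \<ge> 1" unfolding n_def using nn1 by simp
    have "v \<le> (sN - 1)^2" unfolding v_def using mx2 mx0 by (intro power_mono) auto
    also have "\<dots> = real N - 2 * sN + 1" using sNsq by (simp add: power2_eq_square algebra_simps)
    finally have "v \<le> real N" using sN0 by linarith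
    then have "real n \<le> real N" using nr nv1 by linarith
    then have nN: "n \<le> N" by simp
    have sq_lt: "sqrt (real n) < mx"
    proof -
      have "real n < mx^2" using nr nv1 unfolding v_def by linarith
      then have "sqrt (real n) < sqrt (mx^2)" by (subst real_sqrt_less_iff) 
      then show ?thesis using mx0 by simp
    qed
    have sq0: "sqrt (real n) \<ge> 0" by simp
    have dif: "mx - sqrt (real n) = (v - real n) / (mx + sqrt (real n))"
    proof -
      have "(mx - sqrt (real n)) * (mx + sqrt (real n)) = mx^2 - sqrt (real n)^2"
        by (simp add: algebra_simps power2_eq_square)
      then have "(mx - sqrt (real n)) * (mx + sqrt (real n)) = v - real n" unfolding v_def by simp
      moreover have "mx + sqrt (real n) > 0" using sq0 mx0 by linarith
      ultimately show ?thesis by (simp add: eq_divide_eq)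
    qed
    have difb: "mx - sqrt (real n) < \<epsilon> / sN"
    proof -
      have den: "mx + sqrt (real n) \<ge> sN / 2" using sq0 mx1 by linarith
      have "(v - real n) / (mx + sqrt (real n)) \<le> (v - real n) / (sN / 2)"
        using den sN0 nv1 nr by (intro divide_left_mono) auto
      also have "\<dots> < (\<epsilon> / 2) / (sN / 2)" using nv1 nr sN0 by (intro divide_strict_right_mono) auto
      also have "\<dots> = \<epsilon> / sN" by simp
      finally show ?thesis using dif by simp
    qed
    have dpos: "mx - sqrt (real n) > 0" using sq_lt by simp
    have epsd: "\<epsilon> / sN < \<delta>"
    proof -
      have "\<epsilon> / \<delta> < sN" using sN1(2) by linarith
      then have "\<epsilon> < sN * \<delta>" using \<delta> by (simp add: pos_divide_less_eq)
      moreover have "sN > 0" using sN0 by linarith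
      ultimately show ?thesis by (simp add: pos_divide_less_eq mult.commute)
    qed
    have nsq: "sqrt (real n) \<notin> \<nat>"
    proof
      assume "sqrt (real n) \<in> \<nat>"
      then obtain s :: nat where s: "sqrt (real n) = real s" by (auto elim: Nats_cases)
      define k where "k = int s - m"
      have kx: "x - of_int k = mx - sqrt (real n)" unfolding k_def mx_def s by simp
      then have "of_int k < x" using dpos by linarith
      then have "k \<le> floor x" by (simp add: le_floor_iff less_imp_le)
      then have "real_of_int k \<le> real_of_int (floor x)" by (rule of_int_le_iff[THEN iffD2])
      then have "x - of_int k \<ge> \<delta>" unfolding \<delta>_def by linarith
      then show False using kx difb epsd by linarith
    qed
    define y where "y = sqrt (real n) + of_int (- m)"
    have yin: "y \<in> fset N" unfolding y_def by (rule fset_mem[OF n1 nN nsq])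
    have yx: "x - y = mx - sqrt (real n)" unfolding y_def mx_def by simp
    show "\<exists>y\<in>fset N. y < x \<and> x - y < \<epsilon> / sqrt (real N)"
      using yin yx dpos difb unfolding sN_def by (intro bexI[of _ y]) auto
  qed
qed

lemma irr_limit:
  assumes irr: "x \<notin> \<rat>"
  shows "(\<lambda>N. 2 * sqrt (real N) * g x N) \<longlonglongrightarrow> 0"
  unfolding tendsto_iff dist_real_def
proof (intro allI impI)
  fix e :: real assume e: "e > 0"
  define \<epsilon> where "\<epsilon> = e / 4"
  have eps: "\<epsilon> > 0" using e by (simp add: \<epsilon>_def)
  have ev1: "\<forall>\<^sub>F N in sequentially. (N::nat) \<ge> 1" by (rule eventually_sequentiallyI[of 1]) auto
  show "\<forall>\<^sub>F N in sequentially. \<bar>2 * sqrt (real N) * g x N - 0\<bar> < e"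
    using upper_irr[OF irr eps] lower_irr[OF irr eps] ev1
  proof eventually_elim
    fix N :: nat
    assume "\<exists>y\<in>fset N. y > x \<and> y - x < \<epsilon> / sqrt (real N)"
      and "\<exists>y\<in>fset N. y < x \<and> x - y < \<epsilon> / sqrt (real N)" and N1: "N \<ge> 1"
    then obtain y1 y2 where y1: "y1 \<in> fset N" "y1 > x" "y1 - x < \<epsilon> / sqrt (real N)"
      and y2: "y2 \<in> fset N" "y2 < x" "x - y2 < \<epsilon> / sqrt (real N)" by blast
    have up: "g x N \<le> y1 - y2" unfolding g_def by (rule gap_upper[OF y2(1) y1(1) y2(2) y1(2)])
    have lo: "g x N \<ge> 0 + 0" unfolding g_def
      by (rule gap_lower[OF y2(1) y1(1) y2(2) y1(2)]) auto
    have s0: "sqrt (real N) > 0" using N1 by simp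
    have "g x N < 2 * (\<epsilon> / sqrt (real N))" using up y1 y2 by linarith
    then have "sqrt (real N) * g x N < sqrt (real N) * (2 * (\<epsilon> / sqrt (real N)))"
      using s0 by (intro mult_strict_left_mono) auto
    also have "\<dots> = 2 * \<epsilon>" using s0 by simp
    finally have "2 * sqrt (real N) * g x N < e" unfolding \<epsilon>_def by simp
    moreover have "2 * sqrt (real N) * g x N \<ge> 0" using lo s0 by simp
    ultimately show "\<bar>2 * sqrt (real N) * g x N - 0\<bar> < e" by simp
  qed
qed

lemma bez_sol:
  fixes w h s :: int
  assumes "coprime w h"
  shows "\<exists>j. h dvd (s + w * j)"
proof -
  obtain u v where uv: "u * w + v * h = gcd w h" using bezout_int by blast
  have "gcd w h = 1" using assms by simp
  then have uv1: "u * w + v * h = 1" using uv by simp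
  have e1: "1 - u * w = v * h" using uv1 by linarith
  have "s + w * (- s * u) = s * (1 - u * w)" by (simp add: algebra_simps)
  also have "\<dots> = s * (v * h)" by (simp only: e1)
  finally have "s + w * (- s * u) = h * (s * v)" by (simp add: algebra_simps)
  then show ?thesis by (intro exI[of _ "- s * u"]) simp
qed

lemma lift_sol:
  fixes p q D t j :: int
  assumes "p^2 + D = q * t" "q dvd (t + 2 * p * j)"
  shows "q dvd ((p + q * j) - p)" "q^2 dvd ((p + q * j)^2 + D)"
proof -
  show "q dvd ((p + q * j) - p)" by simp
  obtain m where m: "t + 2 * p * j = q * m" using assms(2) by blast
  have "(p + q * j)^2 + D = (p^2 + D) + q * (2 * p * j) + q^2 * j^2"
    by (simp add: power2_eq_square algebra_simps)
  also have "\<dots> = q * (t + 2 * p * j) + q^2 * j^2" using assms(1) by (simp add: algebra_simps)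
  also have "\<dots> = q^2 * (m + j^2)" using m by (simp add: power2_eq_square algebra_simps)
  finally show "q^2 dvd ((p + q * j)^2 + D)" by simp
qed

lemma mod_bounds:
  fixes D r a :: int
  assumes r: "r > 0" and Da: "D mod r = a" and a: "a > 0"
  shows "(D > 0 \<longrightarrow> D \<ge> a) \<and> (D < 0 \<longrightarrow> - D \<ge> r - a)"
proof (intro conjI impI)
  assume "D > 0" then show "D \<ge> a" using Da zmod_le_nonneg_dividend[of D r] by simp
next
  assume D0: "D < 0"
  have dec: "D = r * (D div r) + a" using Da by (metis mult_div_mod_eq)
  have "D div r \<le> -1"
  proof (rule ccontr)
    assume "\<not> D div r \<le> -1"
    then have "D div r \<ge> 0" by simp
    then have "r * (D div r) \<ge> 0" using r by simp
    then show False using dec D0 a by linarith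
  qed
  then have "r * (D div r) \<le> r * (-1)" using r by (intro mult_left_mono) auto
  then show "- D \<ge> r - a" using dec by linarith
qed

lemma int_case:
  fixes p :: int
  shows "(\<lambda>N. 2 * sqrt (real N) * g (of_int p) N) \<longlonglongrightarrow> 2"
proof -
  have "(\<lambda>N. 2 * sqrt (real N) * g (of_int p / of_int 1) N) \<longlonglongrightarrow> of_int (1 + 1) / of_int 1^2"
    by (rule rational_limit[of 1 1 1 p p p]) auto
  then show ?thesis by simp
qed

lemma odd_case:
  fixes p q :: int
  assumes cop: "coprime p q" and q2: "q \<ge> 2" and oq: "odd q"
  shows "(\<lambda>N. 2 * sqrt (real N) * g (of_int p / of_int q) N) \<longlonglongrightarrow> 1 / of_int q"
proof -
  define a where "a = (- (p^2)) mod q"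
  define b where "b = q - a"
  have q0: "q > 0" using q2 by simp
  have a0: "a \<ge> 0" "a < q" unfolding a_def using q0 by simp_all
  have dvda: "q dvd (p^2 + a)"
  proof -
    have "a mod q = (- (p^2)) mod q" unfolding a_def by simp
    then have "q dvd (a - (- (p^2)))" by (simp only: mod_eq_dvd_iff)
    then show ?thesis by (simp add: algebra_simps)
  qed
  have anz: "a \<noteq> 0"
  proof
    assume "a = 0"
    then have "q dvd p^2" using dvda by simp
    moreover have "coprime (p^2) q" using cop by simp
    ultimately have "is_unit q" using coprime_common_divisor[of "p^2" q q] by simp
    then show False using q2 by simp
  qed
  have apos: "a > 0" using a0 anz by simp
  have bpos: "b > 0" unfolding b_def using a0 by simp
  have qq: "q \<le> q^2" using q0 by (simp add: power2_eq_square)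
  have ale: "a \<le> q^2" using a0 qq by simp
  have ble: "b \<le> q^2" unfolding b_def using a0 qq by simp
  have H: "(q^2 * int n - c^2 > 0 \<longrightarrow> q^2 * int n - c^2 \<ge> a) \<and>
       (q^2 * int n - c^2 < 0 \<longrightarrow> c^2 - q^2 * int n \<ge> b)"
    if dv: "q dvd (c - p)" for n :: nat and c :: int
  proof -
    obtain m where m: "c - p = q * m" using dv by blast
    have e: "(q^2 * int n - c^2) - (- (p^2)) = q * (q * int n - m * (c + p))"
    proof -
      have "c^2 - p^2 = (c - p) * (c + p)" by (simp add: power2_eq_square algebra_simps)
      then show ?thesis using m by (simp add: power2_eq_square algebra_simps)
    qed
    have "(q^2 * int n - c^2) mod q = (- (p^2)) mod q"
      unfolding mod_eq_dvd_iff e by simp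
    then have "(q^2 * int n - c^2) mod q = a" unfolding a_def .
    from mod_bounds[OF q0 this apos] show ?thesis unfolding b_def by simp
  qed
  obtain t where t: "p^2 + a = q * t" using dvda by blast
  have cop2: "coprime (2 * p) q" using cop oq by (simp add: coprime_left_2_iff_odd)
  obtain j where j: "q dvd (t + 2 * p * j)" using bez_sol[OF cop2, of t] by (auto simp: mult.assoc)
  obtain j' where j': "q dvd ((t - 1) + 2 * p * j')" using bez_sol[OF cop2, of "t - 1"] by (auto simp: mult.assoc)
  have t': "p^2 + (- b) = q * (t - 1)" using t unfolding b_def by (simp add: algebra_simps)
  note L0 = lift_sol[OF t j] and L1 = lift_sol[OF t' j']
  have "(\<lambda>N. 2 * sqrt (real N) * g (of_int p / of_int q) N) \<longlonglongrightarrow> of_int (a + b) / of_int q^2"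
    by (rule rational_limit[OF _ apos bpos ale ble H L0 L1]) (use q2 in auto)
  moreover have "of_int (a + b) / (of_int q^2 :: real) = 1 / of_int q"
    unfolding b_def using q0 by (simp add: power2_eq_square)
  ultimately show ?thesis by simp
qed

lemma even_case:
  fixes p q :: int
  assumes cop: "coprime p q" and q2: "q \<ge> 2" and eq: "even q"
  shows "(\<lambda>N. 2 * sqrt (real N) * g (of_int p / of_int q) N) \<longlonglongrightarrow> 2 / of_int q"
proof -
  obtain h where h: "q = 2 * h" using eq by blast
  have h1: "h \<ge> 1" using q2 h by simp
  have op: "odd p"
  proof
    assume "even p"
    then have "is_unit (2::int)" using coprime_common_divisor[OF cop, of 2] eq by simp
    then show False by simp
  qed
  define r where "r = 2 * q"
  have r0: "r > 0" unfolding r_def using q2 by simp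
  define a where "a = (- (p^2)) mod r"
  define b where "b = r - a"
  have a0: "a \<ge> 0" "a < r" unfolding a_def using r0 by simp_all
  have dvda: "r dvd (p^2 + a)"
  proof -
    have "a mod r = (- (p^2)) mod r" unfolding a_def by simp
    then have "r dvd (a - (- (p^2)))" by (simp only: mod_eq_dvd_iff)
    then show ?thesis by (simp add: algebra_simps)
  qed
  have anz: "a \<noteq> 0"
  proof
    assume "a = 0"
    then have "r dvd p^2" using dvda by simp
    then have "2 dvd p^2" unfolding r_def by (meson dvd_mult_left)
    then have "even p" by simp
    then show False using op by simp
  qed
  have apos: "a > 0" using a0 anz by simp
  have bpos: "b > 0" unfolding b_def using a0 by simp
  have rq: "r \<le> q^2" unfolding r_def using q2 by (simp add: power2_eq_square mult_right_mono)
  have ale: "a \<le> q^2" using a0 rq by simp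
  have ble: "b \<le> q^2" unfolding b_def using a0 rq by simp
  have H: "(q^2 * int n - c^2 > 0 \<longrightarrow> q^2 * int n - c^2 \<ge> a) \<and>
       (q^2 * int n - c^2 < 0 \<longrightarrow> c^2 - q^2 * int n \<ge> b)"
    if dv: "q dvd (c - p)" for n :: nat and c :: int
  proof -
    obtain m where m: "c - p = q * m" using dv by blast
    have e: "(q^2 * int n - c^2) - (- (p^2)) = r * (h * int n - h * m * m - p * m)"
    proof -
      have "c = p + q * m" using m by simp
      then have "c^2 - p^2 = q^2 * m^2 + 2 * q * p * m" by (simp add: power2_eq_square algebra_simps)
      then show ?thesis unfolding r_def h by (simp add: power2_eq_square algebra_simps)
    qed
    have "(q^2 * int n - c^2) mod r = (- (p^2)) mod r"
      unfolding mod_eq_dvd_iff e by simp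
    then have "(q^2 * int n - c^2) mod r = a" unfolding a_def .
    from mod_bounds[OF r0 this apos] show ?thesis unfolding b_def by simp
  qed
  obtain t where t: "p^2 + a = r * t" using dvda by blast
  have coph: "coprime p h" using cop h by simp
  obtain j where j: "h dvd (t + p * j)" using bez_sol[OF coph, of t] by auto
  obtain j' where j': "h dvd ((t - 1) + p * j')" using bez_sol[OF coph, of "t - 1"] by auto
  have jq: "q dvd (2 * t + 2 * p * j)"
  proof -
    have "2 * h dvd 2 * (t + p * j)" using j by (intro mult_dvd_mono) auto
    then show ?thesis unfolding h by (simp add: algebra_simps)
  qed
  have jq': "q dvd (2 * (t - 1) + 2 * p * j')"
  proof -
    have "2 * h dvd 2 * ((t - 1) + p * j')" using j' by (intro mult_dvd_mono) auto
    then show ?thesis unfolding h by (simp add: algebra_simps)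
  qed
  have t0: "p^2 + a = q * (2 * t)" using t unfolding r_def by (simp add: algebra_simps)
  have t': "p^2 + (- b) = q * (2 * (t - 1))" using t unfolding b_def r_def by (simp add: algebra_simps)
  note L0 = lift_sol[OF t0 jq] and L1 = lift_sol[OF t' jq']
  have "(\<lambda>N. 2 * sqrt (real N) * g (of_int p / of_int q) N) \<longlonglongrightarrow> of_int (a + b) / of_int q^2"
    by (rule rational_limit[OF _ apos bpos ale ble H L0 L1]) (use q2 in auto)
  moreover have "of_int (a + b) / (of_int q^2 :: real) = 2 / of_int q"
    unfolding b_def r_def using q2 by (simp add: power2_eq_square)
  ultimately show ?thesis by simp
qed

theorem mainTheorem1:
  fixes x :: real
  shows "(x \<in> \<int> \<longrightarrow> (\<lambda>N. 2 * sqrt (real N) * g x N) \<longlonglongrightarrow> 2)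
       \<and> (\<forall>p q :: int. coprime p q \<and> q \<ge> 2 \<and> even q \<and> x = of_int p / of_int q \<longrightarrow>
            (\<lambda>N. 2 * sqrt (real N) * g x N) \<longlonglongrightarrow> 2 / of_int q)
       \<and> (\<forall>p q :: int. coprime p q \<and> q \<ge> 2 \<and> odd q \<and> x = of_int p / of_int q \<longrightarrow>
            (\<lambda>N. 2 * sqrt (real N) * g x N) \<longlonglongrightarrow> 1 / of_int q)
       \<and> (x \<notin> \<rat> \<longrightarrow> (\<lambda>N. 2 * sqrt (real N) * g x N) \<longlonglongrightarrow> 0)"
proof (intro conjI allI impI)
  assume "x \<in> \<int>"
  then obtain p where "x = of_int p" by (auto elim: Ints_cases)
  then show "(\<lambda>N. 2 * sqrt (real N) * g x N) \<longlonglongrightarrow> 2" using int_case by simp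
next
  fix p q :: int
  assume "coprime p q \<and> q \<ge> 2 \<and> even q \<and> x = of_int p / of_int q"
  then show "(\<lambda>N. 2 * sqrt (real N) * g x N) \<longlonglongrightarrow> 2 / of_int q" using even_case by blast
next
  fix p q :: int
  assume "coprime p q \<and> q \<ge> 2 \<and> odd q \<and> x = of_int p / of_int q"
  then show "(\<lambda>N. 2 * sqrt (real N) * g x N) \<longlonglongrightarrow> 1 / of_int q" using odd_case by blast
next
  assume "x \<notin> \<rat>"
  then show "(\<lambda>N. 2 * sqrt (real N) * g x N) \<longlonglongrightarrow> 0" by (rule irr_limit)
qed

end
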